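(* Let $R,S$ be commutative rings with nonzero identity, $\delta$ an expansion of ideals of $R$, $\gamma$ an expansion of ideals of $S$, and $f:R\to S$ a $\delta\gamma$-homomorphism. Then: (1) If $f$ is a monomorphism and $J$ is a $\gamma$-$n$-ideal of $S$, then $f^{-1}(J)$ is a $\delta$-$n$-ideal of $R$. (2) If $f$ is an epimorphism and $I$ is a proper ideal of $R$ with $\ker(f)\subseteq I$ which is a $\delta$-$n$-ideal of $R$, then $f(I)$ is a $\gamma$-$n$-ideal of $S$.
   Context: An expansion of ideals of a ring $R$ is a map $\delta$ from the set of ideals of $R$ to itself such that $I\subseteq\delta(I)$ for every ideal $I$, and $\delta(I)\subseteq\delta(J)$ whenever $I\subseteq J$. $\sqrt{0}$ denotes the nilradical of the ring in question. Given an expansion $\delta$ of ideals of a ring $R$, a proper ideal $I$ of $R$ is a $\delta$-$n$-ideal if whenever $a,b\in R$ with $ab\in I$ and $a\notin\sqrt{0_R}$, then $b\in\delta(I)$. A ring homomorphism $f:R\to S$ is a $\delta\gamma$-homomorphism if $\delta(f^{-1}(J))=f^{-1}(\gamma(J))$ for every ideal $J$ of $S$. *)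

theory Defs
  imports "HOL-Algebra.Algebra"
begin

definition nilradical :: "('a, 'm) ring_scheme \<Rightarrow> 'a set" where
  "nilradical R = {a \<in> carrier R. \<exists>n::nat. a [^]\<^bsub>R\<^esub> n = \<zero>\<^bsub>R\<^esub>}"

definition expansion :: "('a, 'm) ring_scheme \<Rightarrow> ('a set \<Rightarrow> 'a set) \<Rightarrow> bool" where
  "expansion R \<delta> \<longleftrightarrow>
     (\<forall>I. ideal I R \<longrightarrow> ideal (\<delta> I) R \<and> I \<subseteq> \<delta> I) \<and>
     (\<forall>I J. ideal I R \<longrightarrow> ideal J R \<longrightarrow> I \<subseteq> J \<longrightarrow> \<delta> I \<subseteq> \<delta> J)"

definition delta_n_ideal :: "('a, 'm) ring_scheme \<Rightarrow> ('a set \<Rightarrow> 'a set) \<Rightarrow> 'a set \<Rightarrow> bool" where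
  "delta_n_ideal R \<delta> I \<longleftrightarrow> ideal I R \<and> I \<noteq> carrier R \<and>
     (\<forall>a \<in> carrier R. \<forall>b \<in> carrier R.
        a \<otimes>\<^bsub>R\<^esub> b \<in> I \<longrightarrow> a \<notin> nilradical R \<longrightarrow> b \<in> \<delta> I)"

definition dg_hom :: "('a, 'm) ring_scheme \<Rightarrow> ('b, 'n) ring_scheme \<Rightarrow>
    ('a set \<Rightarrow> 'a set) \<Rightarrow> ('b set \<Rightarrow> 'b set) \<Rightarrow> ('a \<Rightarrow> 'b) \<Rightarrow> bool" where
  "dg_hom R S \<delta> \<gamma> f \<longleftrightarrow> f \<in> ring_hom R S \<and>
     (\<forall>J. ideal J S \<longrightarrow> \<delta> (f -` J \<inter> carrier R) = f -` (\<gamma> J) \<inter> carrier R)"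

end

theory Submission
  imports Defs
begin

lemma img_ideal:
  assumes hr: "ring_hom_ring R S f" and surj: "f ` carrier R = carrier S" and I: "ideal I R"
  shows "ideal (f ` I) S"
proof -
  interpret h: ring_hom_ring R S f by fact
  interpret I: ideal I R by fact
  have sub: "I \<subseteq> carrier R" by (rule I.a_subset)
  show ?thesis
  proof (rule idealI)
    show "ring S" by (rule h.S.ring_axioms)
    show "subgroup (f ` I) (add_monoid S)"
    proof (rule group.subgroupI)
      show "group (add_monoid S)" by (rule h.S.a_group)
      show "f ` I \<subseteq> carrier (add_monoid S)" using sub h.hom_closed by auto
      show "f ` I \<noteq> {}" using I.zero_closed by blast
      fix a b assume a: "a \<in> f ` I" and b: "b \<in> f ` I"
      then obtain x y where x: "x \<in> I" "a = f x" and y: "y \<in> I" "b = f y" by auto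
      have xR: "x \<in> carrier R" and yR: "y \<in> carrier R" using x y sub by auto
      have "a \<otimes>\<^bsub>add_monoid S\<^esub> b = f (x \<oplus>\<^bsub>R\<^esub> y)" using x y xR yR by simp
      moreover have "x \<oplus>\<^bsub>R\<^esub> y \<in> I" using x y by (simp add: I.a_closed)
      ultimately show "a \<otimes>\<^bsub>add_monoid S\<^esub> b \<in> f ` I" by (metis image_eqI)
    next
      fix a assume a: "a \<in> f ` I"
      then obtain x where x: "x \<in> I" "a = f x" by auto
      have "inv\<^bsub>add_monoid S\<^esub> a = \<ominus>\<^bsub>S\<^esub> a" by (simp add: a_inv_def)
      also have "\<dots> = f (\<ominus>\<^bsub>R\<^esub> x)" using x sub by (simp add: h.hom_a_inv subsetD)
      also have "\<dots> \<in> f ` I" using x I.a_inv_closed by (intro imageI) simp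
      finally show "inv\<^bsub>add_monoid S\<^esub> a \<in> f ` I" .
    qed
  next
    fix a x assume a: "a \<in> f ` I" and x: "x \<in> carrier S"
    obtain y where y: "y \<in> I" "a = f y" using a by auto
    obtain z where z: "z \<in> carrier R" "x = f z" using x surj by (metis imageE)
    have yR: "y \<in> carrier R" using y sub by auto
    have "x \<otimes>\<^bsub>S\<^esub> a = f (z \<otimes>\<^bsub>R\<^esub> y)" using y z yR by simp
    moreover have "z \<otimes>\<^bsub>R\<^esub> y \<in> I" using I.I_l_closed y z by simp
    ultimately show "x \<otimes>\<^bsub>S\<^esub> a \<in> f ` I" by (metis image_eqI)
    have "a \<otimes>\<^bsub>S\<^esub> x = f (y \<otimes>\<^bsub>R\<^esub> z)" using y z yR by simp
    moreover have "y \<otimes>\<^bsub>R\<^esub> z \<in> I" using I.I_r_closed y z by simp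
    ultimately show "a \<otimes>\<^bsub>S\<^esub> x \<in> f ` I" by (metis image_eqI)
  qed
qed

theorem proposition2p20:
  fixes R :: "('a, 'm) ring_scheme" and S :: "('b, 'n) ring_scheme"
    and \<delta> :: "'a set \<Rightarrow> 'a set" and \<gamma> :: "'b set \<Rightarrow> 'b set" and f :: "'a \<Rightarrow> 'b"
  assumes "cring R" and "cring S"
    and "\<one>\<^bsub>R\<^esub> \<noteq> \<zero>\<^bsub>R\<^esub>" and "\<one>\<^bsub>S\<^esub> \<noteq> \<zero>\<^bsub>S\<^esub>"
    and "expansion R \<delta>" and "expansion S \<gamma>"
    and "dg_hom R S \<delta> \<gamma> f"
  shows "(\<forall>J. inj_on f (carrier R) \<longrightarrow> delta_n_ideal S \<gamma> J \<longrightarrow>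
            delta_n_ideal R \<delta> (f -` J \<inter> carrier R))
       \<and> (\<forall>I. f ` carrier R = carrier S \<longrightarrow> ideal I R \<longrightarrow> I \<noteq> carrier R \<longrightarrow>
            a_kernel R S f \<subseteq> I \<longrightarrow> delta_n_ideal R \<delta> I \<longrightarrow>
            delta_n_ideal S \<gamma> (f ` I))"
proof -
  interpret R: cring R by fact
  interpret S: cring S by fact
  have fh: "f \<in> ring_hom R S" and dg: "\<And>J. ideal J S \<Longrightarrow> \<delta> (f -` J \<inter> carrier R) = f -` (\<gamma> J) \<inter> carrier R"
    using assms(7) unfolding dg_hom_def by auto
  interpret h: ring_hom_ring R S f
    by (rule ring_hom_ringI2) (auto simp: fh R.ring_axioms S.ring_axioms)
  have part1: "delta_n_ideal R \<delta> (f -` J \<inter> carrier R)"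
    if inj: "inj_on f (carrier R)" and J: "delta_n_ideal S \<gamma> J" for J
  proof -
    have Ji: "ideal J S" and Jp: "J \<noteq> carrier S"
      and Jn: "\<And>a b. a \<in> carrier S \<Longrightarrow> b \<in> carrier S \<Longrightarrow> a \<otimes>\<^bsub>S\<^esub> b \<in> J \<Longrightarrow> a \<notin> nilradical S \<Longrightarrow> b \<in> \<gamma> J"
      using J unfolding delta_n_ideal_def by auto
    have eq: "f -` J \<inter> carrier R = {r \<in> carrier R. f r \<in> J}" by auto
    have idl: "ideal (f -` J \<inter> carrier R) R" unfolding eq by (rule h.ideal_vimage[OF Ji])
    have prp: "f -` J \<inter> carrier R \<noteq> carrier R"
    proof
      assume "f -` J \<inter> carrier R = carrier R"
      then have "\<one>\<^bsub>S\<^esub> \<in> J" using h.hom_one R.one_closed by force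
      then show False using Jp ideal.one_imp_carrier[OF Ji] by simp
    qed
    show ?thesis unfolding delta_n_ideal_def
    proof (intro conjI idl prp ballI impI)
      fix a b assume a: "a \<in> carrier R" and b: "b \<in> carrier R"
        and ab: "a \<otimes>\<^bsub>R\<^esub> b \<in> f -` J \<inter> carrier R" and an: "a \<notin> nilradical R"
      have "f a \<notin> nilradical S"
      proof
        assume "f a \<in> nilradical S"
        then obtain n :: nat where "f a [^]\<^bsub>S\<^esub> n = \<zero>\<^bsub>S\<^esub>" unfolding nilradical_def by auto
        then have "f (a [^]\<^bsub>R\<^esub> n) = f \<zero>\<^bsub>R\<^esub>" using a by (simp add: h.hom_nat_pow)
        then have "a [^]\<^bsub>R\<^esub> n = \<zero>\<^bsub>R\<^esub>" using inj a R.nat_pow_closed[OF a] inj_onD[OF inj] by (metis R.zero_closed h.hom_zero)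
        then show False using an a unfolding nilradical_def by auto
      qed
      moreover have "f a \<otimes>\<^bsub>S\<^esub> f b \<in> J" using ab a b by simp
      ultimately have "f b \<in> \<gamma> J" using Jn[of "f a" "f b"] a b h.hom_closed by blast
      then show "b \<in> \<delta> (f -` J \<inter> carrier R)" using dg[OF Ji] b by auto
    qed
  qed
  have part2: "delta_n_ideal S \<gamma> (f ` I)"
    if surj: "f ` carrier R = carrier S" and I: "ideal I R" and Ip: "I \<noteq> carrier R"
      and ker: "a_kernel R S f \<subseteq> I" and In: "delta_n_ideal R \<delta> I" for I
  proof -
    have sub: "I \<subseteq> carrier R" using I ideal.axioms(1) additive_subgroup.a_subset by blast
    have In': "\<And>a b. a \<in> carrier R \<Longrightarrow> b \<in> carrier R \<Longrightarrow> a \<otimes>\<^bsub>R\<^esub> b \<in> I \<Longrightarrow> a \<notin> nilradical R \<Longrightarrow> b \<in> \<delta> I"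
      using In unfolding delta_n_ideal_def by auto
    have fI: "ideal (f ` I) S" by (rule img_ideal[OF h.ring_hom_ring_axioms surj I])
    have bkw: "x \<in> I" if x: "x \<in> carrier R" "f x \<in> f ` I" for x
    proof -
      obtain i where i: "i \<in> I" "f x = f i" using x by auto
      have iR: "i \<in> carrier R" using i sub by auto
      have "f (x \<ominus>\<^bsub>R\<^esub> i) = \<zero>\<^bsub>S\<^esub>" using i x iR by (simp add: a_minus_def S.r_neg)
      then have "x \<ominus>\<^bsub>R\<^esub> i \<in> I" using ker x iR unfolding a_kernel_def' by auto
      then have "(x \<ominus>\<^bsub>R\<^esub> i) \<oplus>\<^bsub>R\<^esub> i \<in> I" using i by (simp add: I ideal.axioms(1) additive_subgroup.a_closed)
      moreover have "(x \<ominus>\<^bsub>R\<^esub> i) \<oplus>\<^bsub>R\<^esub> i = x" using x iR by (simp add: a_minus_def R.a_assoc R.l_neg)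
      ultimately show ?thesis by simp
    qed
    have pre: "f -` (f ` I) \<inter> carrier R = I" using bkw sub by auto
    have prp: "f ` I \<noteq> carrier S"
    proof
      assume "f ` I = carrier S"
      then have "f \<one>\<^bsub>R\<^esub> \<in> f ` I" by simp
      then have "\<one>\<^bsub>R\<^esub> \<in> I" using bkw by simp
      then show False using Ip ideal.one_imp_carrier[OF I] by simp
    qed
    show ?thesis unfolding delta_n_ideal_def
    proof (intro conjI fI prp ballI impI)
      fix a' b' assume a': "a' \<in> carrier S" and b': "b' \<in> carrier S"
        and ab: "a' \<otimes>\<^bsub>S\<^esub> b' \<in> f ` I" and an: "a' \<notin> nilradical S"
      obtain a b where a: "a \<in> carrier R" "a' = f a" and b: "b \<in> carrier R" "b' = f b"
        using a' b' surj by (metis imageE)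
      have "a \<otimes>\<^bsub>R\<^esub> b \<in> I" using bkw[of "a \<otimes>\<^bsub>R\<^esub> b"] ab a b by simp
      moreover have "a \<notin> nilradical R"
      proof
        assume "a \<in> nilradical R"
        then obtain n :: nat where "a [^]\<^bsub>R\<^esub> n = \<zero>\<^bsub>R\<^esub>" unfolding nilradical_def by auto
        then have "a' [^]\<^bsub>S\<^esub> n = \<zero>\<^bsub>S\<^esub>" using a by (simp add: h.hom_nat_pow[symmetric])
        then show False using an a' unfolding nilradical_def by auto
      qed
      ultimately have "b \<in> \<delta> I" using In' a b by auto
      then have "b \<in> f -` \<gamma> (f ` I) \<inter> carrier R" using dg[OF fI] pre by simp
      then show "b' \<in> \<gamma> (f ` I)" using b by simp
    qed
  qed
  show ?thesis using part1 part2 by blast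
qed

end
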